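(* Let $X,X_1,X_2,\dots$ be i.i.d. positive random variables with $\mathbb{E}X=1$ and $\mathbb{E}X^2<\infty$, let $p\ge2$ be an integer, and let $T_n=\frac{X_1^2+\dots+X_n^2}{X_1+\dots+X_n}$. If the sequence $(\mathbb{E}T_n^p)_n$ is bounded, then $\mathbb{E}X^p<\infty$. Moreover, for every $n\ge2$, $$\mathbb{E}\,\frac{X_1^{2p}}{\left(\frac1n(X_1+X_2+\dots+X_n)\right)^p}\ \ge\ 2^{-p}n^p\,\mathbb{E}\left[X^p1_{\{X\ge n\}}\right].$$ *)

theory Defs
  imports "HOL-Probability.Probability"
begin

end

theory Submission
  imports Defs
begin

lemma bern_inv:
  fixes t :: real and p :: nat
  assumes "t > 0"
  shows "1 - real p * (t - 1) \<le> 1 / t ^ p"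
proof (induction p)
  case 0 then show ?case by simp
next
  case (Suc p)
  have eq: "1 / t ^ Suc p = (1 / t ^ p) / t" by simp
  show ?case
  proof (cases "1 - real p * (t - 1) \<ge> 0")
    case True
    have d: "(1 - real p * (t - 1)) - t * (1 - real (Suc p) * (t - 1)) = (real p + 1) * (t - 1)^2"
      by (simp add: algebra_simps power2_eq_square)
    have "(real p + 1) * (t - 1)^2 \<ge> 0" by simp
    with d have "t * (1 - real (Suc p) * (t - 1)) \<le> 1 - real p * (t - 1)" by linarith
    also have "\<dots> \<le> 1 / t ^ p" by (rule Suc.IH)
    finally have "t * (1 - real (Suc p) * (t - 1)) \<le> 1 / t ^ p" .
    then have "(1 - real (Suc p) * (t - 1)) * t \<le> 1 / t ^ p" by (simp add: mult.commute)
    then show ?thesis unfolding eq using pos_le_divide_eq[OF assms] by blast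
  next
    case False
    then have a: "real p * (t - 1) > 1" by linarith
    then have "t - 1 > 0" by (metis less_numeral_extra(1) mult_nonneg_nonpos not_le of_nat_0_le_iff order_less_trans zero_less_one)
    then have "real (Suc p) * (t - 1) > 1" using a by (simp add: distrib_right)
    moreover have "1 / t ^ Suc p > 0" using assms by simp
    ultimately show ?thesis by linarith
  qed
qed

lemma tangent_ineq:
  fixes u v :: real and p :: nat
  assumes "u > 0" "v > 0"
  shows "1 / v ^ p - real p * (u - v) / v ^ (p + 1) \<le> 1 / u ^ p"
proof -
  have b: "1 - real p * (u / v - 1) \<le> 1 / (u / v) ^ p" using bern_inv[of "u/v" p] assms by simp
  have e1: "1 / (u / v) ^ p = v ^ p / u ^ p" by (simp add: power_divide)
  have e2: "u / v - 1 = (u - v) / v" using assms by (simp add: diff_divide_distrib)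
  have "(1 - real p * ((u - v) / v)) * (1 / v ^ p) \<le> (v ^ p / u ^ p) * (1 / v ^ p)"
    using b e1 e2 assms by (intro mult_right_mono) auto
  moreover have "(1 - real p * ((u - v) / v)) * (1 / v ^ p) = 1 / v ^ p - real p * (u - v) / v ^ (p + 1)"
    using assms by (simp add: field_simps)
  moreover have "(v ^ p / u ^ p) * (1 / v ^ p) = 1 / u ^ p"
    using assms by simp
  ultimately show ?thesis by simp
qed

lemma (in prob_space) pair_indep:
  assumes "indep_vars (\<lambda>_. borel) X UNIV" "i \<noteq> j"
  shows "indep_var borel (X i) borel (X j)"
proof -
  have "indep_var (PiM {i} (\<lambda>_. borel)) (\<lambda>\<omega>. restrict (\<lambda>k. X k \<omega>) {i})
                  (PiM {j} (\<lambda>_. borel)) (\<lambda>\<omega>. restrict (\<lambda>k. X k \<omega>) {j})"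
    using assms by (intro indep_var_restrict) auto
  then have "indep_var borel ((\<lambda>f. f i) \<circ> (\<lambda>\<omega>. restrict (\<lambda>k. X k \<omega>) {i}))
                 borel ((\<lambda>f. f j) \<circ> (\<lambda>\<omega>. restrict (\<lambda>k. X k \<omega>) {j}))"
    by (rule indep_var_compose) (auto intro: measurable_component_singleton)
  then show ?thesis by (simp add: comp_def)
qed


lemma (in prob_space) part2_K:
  fixes X :: "nat \<Rightarrow> 'a \<Rightarrow> real" and p n :: nat and K :: real
  assumes indep: "indep_vars (\<lambda>_. borel) X UNIV"
    and ident: "\<And>i. distr M borel (X i) = distr M borel (X 0)"
    and pos: "\<And>i \<omega>. \<omega> \<in> space M \<Longrightarrow> X i \<omega> > 0"
    and int1: "integrable M (X 0)"
    and mean: "expectation (X 0) = 1"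
    and n: "n \<ge> 2"
  shows "(\<integral>\<^sup>+ \<omega>. ennreal ((X 1 \<omega>) ^ (2 * p) / ((1 / real n) * (\<Sum>i\<in>{1..n}. X i \<omega>)) ^ p) \<partial>M)
     \<ge> ennreal ((1 / 2) ^ p * real n ^ p) *
       (\<integral>\<^sup>+ \<omega>. ennreal ((X 1 \<omega>) ^ p * (if real n \<le> X 1 \<omega> \<and> X 1 \<omega> \<le> K then 1 else 0)) \<partial>M)"
proof -
  have meas[measurable]: "\<And>i. X i \<in> borel_measurable M"
    using indep unfolding indep_vars_def by auto
  have intX: "integrable M (X i)" for i
  proof -
    have "integrable (distr M borel (X i)) (\<lambda>x. x) = integrable M (\<lambda>x. X i x)"
      by (intro integrable_distr_eq) auto
    moreover have "integrable (distr M borel (X 0)) (\<lambda>x. x) = integrable M (\<lambda>x. X 0 x)"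
      by (intro integrable_distr_eq) auto
    ultimately show ?thesis using int1 ident[of i] by simp
  qed
  have EX: "expectation (X i) = 1" for i
  proof -
    have "integral\<^sup>L (distr M borel (X i)) (\<lambda>x. x) = expectation (\<lambda>x. X i x)"
      by (intro integral_distr) auto
    moreover have "integral\<^sup>L (distr M borel (X 0)) (\<lambda>x. x) = expectation (\<lambda>x. X 0 x)"
      by (intro integral_distr) auto
    ultimately show ?thesis using mean ident[of i] by simp
  qed
  define m where "m = real n - 1"
  have m1: "m \<ge> 1" using n unfolding m_def by simp
  define I where "I = (\<lambda>x::real. if real n \<le> x \<and> x \<le> K then 1 else (0::real))"
  define R where "R = (\<lambda>\<omega>. \<Sum>i\<in>{2..n}. X i \<omega>)"
  define g where "g = (\<lambda>x::real. real p * real n ^ p * x ^ (2 * p) / (x + m) ^ (p + 1) * I x)"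
  define F where "F = (\<lambda>\<omega>. real n ^ p * X 1 \<omega> ^ (2 * p) / (X 1 \<omega> + R \<omega>) ^ p * I (X 1 \<omega>))"
  define a where "a = (\<lambda>\<omega>. real n ^ p * X 1 \<omega> ^ (2 * p) / (X 1 \<omega> + m) ^ p * I (X 1 \<omega>))"
  define c where "c = (\<lambda>\<omega>. (1 / 2) ^ p * real n ^ p * (X 1 \<omega> ^ p * I (X 1 \<omega>)))"
  have I_meas[measurable]: "I \<in> borel_measurable borel" unfolding I_def by measurable
  have g_meas[measurable]: "g \<in> borel_measurable borel" unfolding g_def by measurable
  have R_meas[measurable]: "R \<in> borel_measurable M" unfolding R_def by measurable
  have Rpos: "R \<omega> \<ge> 0" if "\<omega> \<in> space M" for \<omega>
    unfolding R_def using pos[OF that] by (intro sum_nonneg) (auto intro: less_imp_le)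
  have S_eq: "(\<Sum>i\<in>{1..n}. X i \<omega>) = X 1 \<omega> + R \<omega>" for \<omega>
  proof -
    have "(\<Sum>i\<in>{1..n}. X i \<omega>) = X 1 \<omega> + (\<Sum>i\<in>{Suc 1..n}. X i \<omega>)"
      using n by (intro sum.atLeast_Suc_atMost) auto
    then show ?thesis unfolding R_def by (simp add: numeral_2_eq_2)
  qed
  have IK: "I x \<noteq> 0 \<Longrightarrow> real n \<le> x \<and> x \<le> K" for x unfolding I_def by (auto split: if_splits)
  have I01: "I x = 0 \<or> I x = 1" for x unfolding I_def by auto
  have bound_gen: "0 \<le> c0 * y ^ (2 * p) / d * I y \<and> c0 * y ^ (2 * p) / d * I y \<le> c0 * K ^ (2 * p)"
    if "I y \<noteq> 0 \<Longrightarrow> d \<ge> 1" "y \<ge> 0" "c0 \<ge> 0" for y d c0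
  proof (cases "I y = 0")
    case True then show ?thesis using that by (simp add: power_mult)
  next
    case False
    then have "I y = 1" "real n \<le> y" "y \<le> K" "d \<ge> 1" using I01 IK that by auto
    moreover have "y ^ (2 * p) / d \<le> y ^ (2 * p)" using \<open>d \<ge> 1\<close> that
      by (simp add: divide_le_eq mult_le_cancel_left1)
    moreover have "y ^ (2 * p) \<le> K ^ (2 * p)" using that \<open>y \<le> K\<close> by (intro power_mono) auto
    ultimately have "y ^ (2 * p) / d \<le> K ^ (2 * p)" by linarith
    then have "c0 * (y ^ (2 * p) / d) \<le> c0 * K ^ (2 * p)" using that by (intro mult_left_mono) auto
    then show ?thesis using \<open>I y = 1\<close> \<open>d \<ge> 1\<close> that by simp
  qed
  have X1pos: "X 1 \<omega> > 0" if "\<omega> \<in> space M" for \<omega> using pos[OF that] .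
  have F_b: "0 \<le> F \<omega> \<and> F \<omega> \<le> real n ^ p * K ^ (2 * p)" if "\<omega> \<in> space M" for \<omega>
  proof -
    have "I (X 1 \<omega>) \<noteq> 0 \<Longrightarrow> (X 1 \<omega> + R \<omega>) ^ p \<ge> 1"
      using IK[of "X 1 \<omega>"] Rpos[OF that] n by (intro one_le_power) auto
    then show ?thesis unfolding F_def using bound_gen[of "X 1 \<omega>" "(X 1 \<omega> + R \<omega>) ^ p" "real n ^ p"] X1pos[OF that] by auto
  qed
  have a_b: "0 \<le> a \<omega> \<and> a \<omega> \<le> real n ^ p * K ^ (2 * p)" if "\<omega> \<in> space M" for \<omega>
  proof -
    have "(X 1 \<omega> + m) ^ p \<ge> 1"
      using X1pos[OF that] m1 by (intro one_le_power) auto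
    then show ?thesis unfolding a_def using bound_gen[of "X 1 \<omega>" "(X 1 \<omega> + m) ^ p" "real n ^ p"] X1pos[OF that] by auto
  qed
  have g_b: "0 \<le> g (X 1 \<omega>) \<and> g (X 1 \<omega>) \<le> real p * real n ^ p * K ^ (2 * p)" if "\<omega> \<in> space M" for \<omega>
  proof -
    have "(X 1 \<omega> + m) ^ (p + 1) \<ge> 1"
      using X1pos[OF that] m1 by (intro one_le_power) auto
    then show ?thesis unfolding g_def using bound_gen[of "X 1 \<omega>" "(X 1 \<omega> + m) ^ (p + 1)" "real p * real n ^ p"] X1pos[OF that] by auto
  qed
  have c_b: "0 \<le> c \<omega> \<and> c \<omega> \<le> (1 / 2) ^ p * real n ^ p * \<bar>K\<bar> ^ p" if "\<omega> \<in> space M" for \<omega>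
  proof (cases "I (X 1 \<omega>) = 0")
    case True then show ?thesis unfolding c_def using X1pos[OF that] n
      by (simp add: zero_le_mult_iff)
  next
    case False
    then have "I (X 1 \<omega>) = 1" "X 1 \<omega> \<le> K" using I01 IK by auto
    moreover have "X 1 \<omega> ^ p \<le> K ^ p" using X1pos[OF that] \<open>X 1 \<omega> \<le> K\<close> by (intro power_mono) auto
    moreover have "K = \<bar>K\<bar>" using X1pos[OF that] \<open>X 1 \<omega> \<le> K\<close> by simp
    ultimately show ?thesis unfolding c_def using X1pos[OF that] by (simp add: mult_left_mono)
  qed
  have F_meas[measurable]: "F \<in> borel_measurable M" unfolding F_def by measurable
  have a_meas[measurable]: "a \<in> borel_measurable M" unfolding a_def by measurable
  have c_meas[measurable]: "c \<in> borel_measurable M" unfolding c_def by measurable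
  have intF: "integrable M F"
    by (rule integrable_const_bound[where B="real n ^ p * K ^ (2 * p)"]) (intro AE_I2, use F_b in fastforce, measurable)
  have inta: "integrable M a"
    by (rule integrable_const_bound[where B="real n ^ p * K ^ (2 * p)"]) (intro AE_I2, use a_b in fastforce, measurable)
  have intc: "integrable M c"
    by (rule integrable_const_bound[where B="(1 / 2) ^ p * real n ^ p * \<bar>K\<bar> ^ p"]) (intro AE_I2, use c_b in fastforce, measurable)
  have intg: "integrable M (\<lambda>\<omega>. g (X 1 \<omega>))"
    by (rule integrable_const_bound[where B="real p * real n ^ p * K ^ (2 * p)"]) (intro AE_I2, use g_b in fastforce, measurable)
  have gX: "integrable M (\<lambda>\<omega>. g (X 1 \<omega>) * X j \<omega>) \<and>
      (\<integral>\<omega>. g (X 1 \<omega>) * X j \<omega> \<partial>M) = (\<integral>\<omega>. g (X 1 \<omega>) \<partial>M)" if "j \<in> {2..n}" for j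
  proof -
    have "indep_var borel (X 1) borel (X j)" using that by (intro pair_indep[OF indep]) auto
    then have "indep_var borel (g \<circ> X 1) borel ((\<lambda>x. x) \<circ> X j)"
      by (rule indep_var_compose) auto
    then have iv: "indep_var borel (\<lambda>\<omega>. g (X 1 \<omega>)) borel (X j)"
      by (simp add: comp_def)
    have e1: "(\<integral>\<omega>. g (X 1 \<omega>) * X j \<omega> \<partial>M) = (\<integral>\<omega>. g (X 1 \<omega>) \<partial>M) * (\<integral>\<omega>. X j \<omega> \<partial>M)"
      by (rule indep_var_lebesgue_integral[OF iv intg intX[of j]])
    have e2: "integrable M (\<lambda>\<omega>. g (X 1 \<omega>) * X j \<omega>)"
      by (rule indep_var_integrable[OF iv intg intX[of j]])
    show ?thesis using e1 e2 EX[of j] by simp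
  qed
  have intgR: "integrable M (\<lambda>\<omega>. g (X 1 \<omega>) * R \<omega>)"
    unfolding R_def sum_distrib_left by (intro Bochner_Integration.integrable_sum) (use gX in auto)
  have gR: "(\<integral>\<omega>. g (X 1 \<omega>) * R \<omega> \<partial>M) = m * (\<integral>\<omega>. g (X 1 \<omega>) \<partial>M)"
  proof -
    have "(\<integral>\<omega>. g (X 1 \<omega>) * R \<omega> \<partial>M) = (\<Sum>j\<in>{2..n}. \<integral>\<omega>. g (X 1 \<omega>) * X j \<omega> \<partial>M)"
      unfolding R_def sum_distrib_left by (intro Bochner_Integration.integral_sum) (use gX in auto)
    also have "\<dots> = (\<Sum>j\<in>{2..n}. \<integral>\<omega>. g (X 1 \<omega>) \<partial>M)" using gX by (intro sum.cong) auto
    also have "\<dots> = m * (\<integral>\<omega>. g (X 1 \<omega>) \<partial>M)" using n unfolding m_def by (simp add: of_nat_diff)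
    finally show ?thesis .
  qed
  have LHS_eq: "X 1 \<omega> ^ (2 * p) / ((1 / real n) * (\<Sum>i\<in>{1..n}. X i \<omega>)) ^ p
      = real n ^ p * X 1 \<omega> ^ (2 * p) / (X 1 \<omega> + R \<omega>) ^ p" for \<omega>
    unfolding S_eq using n by (simp add: power_mult_distrib power_divide)
  have F_le: "F \<omega> \<le> real n ^ p * X 1 \<omega> ^ (2 * p) / (X 1 \<omega> + R \<omega>) ^ p" if "\<omega> \<in> space M" for \<omega>
  proof -
    have "0 \<le> real n ^ p * X 1 \<omega> ^ (2 * p) / (X 1 \<omega> + R \<omega>) ^ p"
      using X1pos[OF that] Rpos[OF that] by simp
    then show ?thesis unfolding F_def using I01[of "X 1 \<omega>"] by auto
  qed
  have tang: "a \<omega> - (g (X 1 \<omega>) * R \<omega> - m * g (X 1 \<omega>)) \<le> F \<omega>" if "\<omega> \<in> space M" for \<omega>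
  proof (cases "I (X 1 \<omega>) = 0")
    case True then show ?thesis unfolding a_def g_def F_def by simp
  next
    case False
    then have I1: "I (X 1 \<omega>) = 1" using I01 by auto
    define C where "C = real n ^ p * X 1 \<omega> ^ (2 * p)"
    define u where "u = X 1 \<omega> + R \<omega>"
    define v where "v = X 1 \<omega> + m"
    have C0: "C \<ge> 0" unfolding C_def using X1pos[OF that] by simp
    have "1 / v ^ p - real p * (u - v) / v ^ (p + 1) \<le> 1 / u ^ p"
      unfolding u_def v_def using X1pos[OF that] Rpos[OF that] m1
      by (intro tangent_ineq) auto
    then have "C * (1 / v ^ p - real p * (u - v) / v ^ (p + 1)) \<le> C * (1 / u ^ p)"
      using C0 by (rule mult_left_mono)
    moreover have "a \<omega> - (g (X 1 \<omega>) * R \<omega> - m * g (X 1 \<omega>)) = C * (1 / v ^ p - real p * (u - v) / v ^ (p + 1))"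
    proof -
      have vp: "v ^ p \<noteq> 0" "v ^ (p + 1) \<noteq> 0" unfolding v_def using X1pos[OF that] m1 by auto
      have "a \<omega> = C / v ^ p" unfolding a_def I1 C_def v_def by simp
      moreover have "g (X 1 \<omega>) = real p * C / v ^ (p + 1)" unfolding g_def I1 C_def v_def by simp
      moreover have "u - v = R \<omega> - m" unfolding u_def v_def by simp
      moreover have "C / v ^ p - (real p * C / v ^ (p + 1) * R \<omega> - m * (real p * C / v ^ (p + 1)))
          = C * (1 / v ^ p - real p * (R \<omega> - m) / v ^ (p + 1))"
        using vp by (simp add: field_simps)
      ultimately show ?thesis by simp
    qed
    moreover have "F \<omega> = C * (1 / u ^ p)"
      unfolding F_def I1 C_def u_def by simp
    ultimately show ?thesis by simp
  qed
  have ac: "c \<omega> \<le> a \<omega>" if "\<omega> \<in> space M" for \<omega>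
  proof (cases "I (X 1 \<omega>) = 0")
    case True then show ?thesis unfolding a_def c_def by simp
  next
    case False
    then have I1: "I (X 1 \<omega>) = 1" and xn: "real n \<le> X 1 \<omega>" using I01 IK by auto
    define x where "x = X 1 \<omega>"
    have x0: "x > 0" unfolding x_def using X1pos[OF that] .
    have "x + m \<le> 2 * x" using xn unfolding x_def m_def by simp
    then have vb: "(x + m) ^ p \<le> (2 * x) ^ p" using x0 m1 by (intro power_mono) auto
    have "x ^ (2 * p) / (2 * x) ^ p \<le> x ^ (2 * p) / (x + m) ^ p"
      using vb x0 m1 by (intro divide_left_mono) auto
    moreover have "x ^ (2 * p) / (2 * x) ^ p = (1 / 2) ^ p * x ^ p"
    proof -
      have e: "x ^ (2 * p) = x ^ p * x ^ p" by (simp add: mult_2 power_add)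
      have e2: "(2 * x) ^ p = 2 ^ p * x ^ p" by (rule power_mult_distrib)
      have "x ^ p * x ^ p / (2 ^ p * x ^ p) = x ^ p / 2 ^ p"
        by (rule nonzero_mult_divide_mult_cancel_right) (use x0 in simp)
      also have "\<dots> = (1 / 2) ^ p * x ^ p" by (simp add: power_one_over)
      finally show ?thesis using e e2 by simp
    qed
    ultimately have "(1 / 2) ^ p * x ^ p \<le> x ^ (2 * p) / (x + m) ^ p" by simp
    then have "real n ^ p * ((1 / 2) ^ p * x ^ p) \<le> real n ^ p * (x ^ (2 * p) / (x + m) ^ p)"
      by (intro mult_left_mono) auto
    then show ?thesis unfolding a_def c_def I1 x_def by (simp add: mult_ac)
  qed
  have int_rhs: "integrable M (\<lambda>\<omega>. a \<omega> - (g (X 1 \<omega>) * R \<omega> - m * g (X 1 \<omega>)))"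
    using inta intgR intg by auto
  have "(\<integral>\<omega>. a \<omega> - (g (X 1 \<omega>) * R \<omega> - m * g (X 1 \<omega>)) \<partial>M)
      = (\<integral>\<omega>. a \<omega> \<partial>M) - ((\<integral>\<omega>. g (X 1 \<omega>) * R \<omega> \<partial>M) - m * (\<integral>\<omega>. g (X 1 \<omega>) \<partial>M))"
    using inta intgR intg by simp
  also have "\<dots> = (\<integral>\<omega>. a \<omega> \<partial>M)" using gR by simp
  finally have eqa: "(\<integral>\<omega>. a \<omega> - (g (X 1 \<omega>) * R \<omega> - m * g (X 1 \<omega>)) \<partial>M) = (\<integral>\<omega>. a \<omega> \<partial>M)" .
  have "(\<integral>\<omega>. a \<omega> - (g (X 1 \<omega>) * R \<omega> - m * g (X 1 \<omega>)) \<partial>M) \<le> (\<integral>\<omega>. F \<omega> \<partial>M)"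
    by (intro integral_mono int_rhs intF tang)
  moreover have "(\<integral>\<omega>. c \<omega> \<partial>M) \<le> (\<integral>\<omega>. a \<omega> \<partial>M)"
    by (intro integral_mono intc inta ac)
  ultimately have cF: "(\<integral>\<omega>. c \<omega> \<partial>M) \<le> (\<integral>\<omega>. F \<omega> \<partial>M)" using eqa by simp
  have "ennreal ((1 / 2) ^ p * real n ^ p) *
       (\<integral>\<^sup>+ \<omega>. ennreal ((X 1 \<omega>) ^ p * (if real n \<le> X 1 \<omega> \<and> X 1 \<omega> \<le> K then 1 else 0)) \<partial>M)
      = (\<integral>\<^sup>+ \<omega>. ennreal ((1 / 2) ^ p * real n ^ p) * ennreal ((X 1 \<omega>) ^ p * I (X 1 \<omega>)) \<partial>M)"
    unfolding I_def by (rule nn_integral_cmult[symmetric]) measurable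
  also have "\<dots> = (\<integral>\<^sup>+ \<omega>. ennreal (c \<omega>) \<partial>M)"
    unfolding c_def
  proof (intro nn_integral_cong)
    fix \<omega> assume "\<omega> \<in> space M"
    then have "0 \<le> X 1 \<omega> ^ p * I (X 1 \<omega>)" using X1pos[of \<omega>] I01[of "X 1 \<omega>"] by auto
    then show "ennreal ((1 / 2) ^ p * real n ^ p) * ennreal (X 1 \<omega> ^ p * I (X 1 \<omega>)) =
         ennreal ((1 / 2) ^ p * real n ^ p * (X 1 \<omega> ^ p * I (X 1 \<omega>)))"
      by (simp add: ennreal_mult)
  qed
  also have "\<dots> = ennreal (\<integral>\<omega>. c \<omega> \<partial>M)"
    by (intro nn_integral_eq_integral intc AE_I2) (use c_b in auto)
  also have "\<dots> \<le> ennreal (\<integral>\<omega>. F \<omega> \<partial>M)" using cF by (rule ennreal_leI)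
  also have "\<dots> = (\<integral>\<^sup>+ \<omega>. ennreal (F \<omega>) \<partial>M)"
    by (intro nn_integral_eq_integral[symmetric] intF AE_I2) (use F_b in auto)
  also have "\<dots> \<le> (\<integral>\<^sup>+ \<omega>. ennreal ((X 1 \<omega>) ^ (2 * p) / ((1 / real n) * (\<Sum>i\<in>{1..n}. X i \<omega>)) ^ p) \<partial>M)"
    by (intro nn_integral_mono ennreal_leI) (unfold LHS_eq, erule F_le)
  finally show ?thesis .
qed

lemma (in prob_space) part2:
  fixes X :: "nat \<Rightarrow> 'a \<Rightarrow> real" and p n :: nat
  assumes indep: "indep_vars (\<lambda>_. borel) X UNIV"
    and ident: "\<And>i. distr M borel (X i) = distr M borel (X 0)"
    and pos: "\<And>i \<omega>. \<omega> \<in> space M \<Longrightarrow> X i \<omega> > 0"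
    and int1: "integrable M (X 0)"
    and mean: "expectation (X 0) = 1"
    and n: "n \<ge> 2"
  shows "(\<integral>\<^sup>+ \<omega>. ennreal ((X 1 \<omega>) ^ (2 * p) / ((1 / real n) * (\<Sum>i\<in>{1..n}. X i \<omega>)) ^ p) \<partial>M)
           \<ge> ennreal ((1 / 2) ^ p * real n ^ p) *
             (\<integral>\<^sup>+ \<omega>. ennreal ((X 0 \<omega>) ^ p * indicator {\<omega>'. X 0 \<omega>' \<ge> real n} \<omega>) \<partial>M)"
proof -
  have meas[measurable]: "\<And>i. X i \<in> borel_measurable M"
    using indep unfolding indep_vars_def by auto
  define h where "h = (\<lambda>x::real. ennreal (x ^ p * (if real n \<le> x then 1 else 0)))"
  define f where "f = (\<lambda>(K::nat) \<omega>. ennreal ((X 1 \<omega>) ^ p * (if real n \<le> X 1 \<omega> \<and> X 1 \<omega> \<le> real K then 1 else 0)))"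
  have hm[measurable]: "h \<in> borel_measurable borel" unfolding h_def by measurable
  have fm[measurable]: "f K \<in> borel_measurable M" for K unfolding f_def by measurable
  have inc: "incseq f"
    unfolding incseq_def le_fun_def f_def by (auto intro!: ennreal_leI)
  have hsup: "h (X 1 \<omega>) = (SUP K. f K \<omega>)" if "\<omega> \<in> space M" for \<omega>
  proof (rule antisym)
    obtain K :: nat where K: "X 1 \<omega> \<le> real K" using real_arch_simple by blast
    have "h (X 1 \<omega>) = f K \<omega>" unfolding h_def f_def using K by auto
    also have "f K \<omega> \<le> (SUP K. f K \<omega>)" by (rule SUP_upper) simp
    finally show "h (X 1 \<omega>) \<le> (SUP K. f K \<omega>)" .
  next
    have "0 \<le> X 1 \<omega> ^ p" using pos[OF that, of 1] by simp
    then show "(SUP K. f K \<omega>) \<le> h (X 1 \<omega>)"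
      by (intro SUP_least) (auto simp: h_def f_def intro!: ennreal_leI)
  qed
  have "(\<integral>\<^sup>+ \<omega>. ennreal ((X 0 \<omega>) ^ p * indicator {\<omega>'. X 0 \<omega>' \<ge> real n} \<omega>) \<partial>M)
      = (\<integral>\<^sup>+ \<omega>. h (X 0 \<omega>) \<partial>M)"
    by (intro nn_integral_cong) (simp add: h_def indicator_def)
  also have "\<dots> = integral\<^sup>N (distr M borel (X 0)) h"
    by (rule nn_integral_distr[symmetric]) auto
  also have "\<dots> = integral\<^sup>N (distr M borel (X 1)) h" using ident[of 1] by simp
  also have "\<dots> = (\<integral>\<^sup>+ \<omega>. h (X 1 \<omega>) \<partial>M)"
    by (rule nn_integral_distr) auto
  also have "\<dots> = (\<integral>\<^sup>+ \<omega>. (SUP K. f K \<omega>) \<partial>M)"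
    by (intro nn_integral_cong hsup)
  also have "\<dots> = (SUP K. integral\<^sup>N M (f K))"
    by (rule nn_integral_monotone_convergence_SUP[OF inc fm])
  finally have eq: "(\<integral>\<^sup>+ \<omega>. ennreal ((X 0 \<omega>) ^ p * indicator {\<omega>'. X 0 \<omega>' \<ge> real n} \<omega>) \<partial>M)
      = (SUP K. integral\<^sup>N M (f K))" .
  show ?thesis
    unfolding eq SUP_mult_left_ennreal
  proof (rule SUP_least)
    fix K :: nat
    show "ennreal ((1 / 2) ^ p * real n ^ p) * integral\<^sup>N M (f K)
      \<le> (\<integral>\<^sup>+ \<omega>. ennreal ((X 1 \<omega>) ^ (2 * p) / ((1 / real n) * (\<Sum>i\<in>{1..n}. X i \<omega>)) ^ p) \<partial>M)"
      unfolding f_def by (rule part2_K[OF indep ident pos int1 mean n])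
  qed
qed

theorem lemma2:
  fixes M :: "'a measure" and X :: "nat \<Rightarrow> 'a \<Rightarrow> real" and p :: nat
  assumes "prob_space M"
    and indep: "prob_space.indep_vars M (\<lambda>_. borel) X UNIV"
    and ident: "\<And>i. distr M borel (X i) = distr M borel (X 0)"
    and pos: "\<And>i \<omega>. \<omega> \<in> space M \<Longrightarrow> X i \<omega> > 0"
    and int1: "integrable M (X 0)"
    and mean: "prob_space.expectation M (X 0) = 1"
    and int2: "integrable M (\<lambda>\<omega>. (X 0 \<omega>)\<^sup>2)"
    and p: "p \<ge> 2"
  shows "((\<exists>C < \<infinity>. \<forall>n. (\<integral>\<^sup>+ \<omega>. ennreal (((\<Sum>i\<in>{1..n}. (X i \<omega>)\<^sup>2) / (\<Sum>i\<in>{1..n}. X i \<omega>)) ^ p) \<partial>M) \<le> C)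
           \<longrightarrow> (\<integral>\<^sup>+ \<omega>. ennreal ((X 0 \<omega>) ^ p) \<partial>M) < \<infinity>)
       \<and> (\<forall>n::nat. n \<ge> 2 \<longrightarrow>
           (\<integral>\<^sup>+ \<omega>. ennreal ((X 1 \<omega>) ^ (2 * p) / ((1 / real n) * (\<Sum>i\<in>{1..n}. X i \<omega>)) ^ p) \<partial>M)
           \<ge> ennreal ((1 / 2) ^ p * real n ^ p) *
             (\<integral>\<^sup>+ \<omega>. ennreal ((X 0 \<omega>) ^ p * indicator {\<omega>'. X 0 \<omega>' \<ge> real n} \<omega>) \<partial>M))"
proof -
  interpret prob_space M by fact
  have meas[measurable]: "\<And>i. X i \<in> borel_measurable M"
    using indep unfolding indep_vars_def by auto
  have P2: "\<forall>n::nat. n \<ge> 2 \<longrightarrow>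
           (\<integral>\<^sup>+ \<omega>. ennreal ((X 1 \<omega>) ^ (2 * p) / ((1 / real n) * (\<Sum>i\<in>{1..n}. X i \<omega>)) ^ p) \<partial>M)
           \<ge> ennreal ((1 / 2) ^ p * real n ^ p) *
             (\<integral>\<^sup>+ \<omega>. ennreal ((X 0 \<omega>) ^ p * indicator {\<omega>'. X 0 \<omega>' \<ge> real n} \<omega>) \<partial>M)"
    using part2[OF indep ident pos int1 mean] by blast
  have P1: "(\<integral>\<^sup>+ \<omega>. ennreal ((X 0 \<omega>) ^ p) \<partial>M) < \<infinity>"
    if hyp: "\<exists>C < \<infinity>. \<forall>n. (\<integral>\<^sup>+ \<omega>. ennreal (((\<Sum>i\<in>{1..n}. (X i \<omega>)\<^sup>2) / (\<Sum>i\<in>{1..n}. X i \<omega>)) ^ p) \<partial>M) \<le> C"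
  proof -
    obtain C where C: "C < \<infinity>"
      "(\<integral>\<^sup>+ \<omega>. ennreal (((\<Sum>i\<in>{1..2}. (X i \<omega>)\<^sup>2) / (\<Sum>i\<in>{1..2}. X i \<omega>)) ^ p) \<partial>M) \<le> C"
      using hyp by blast
    define T where "T = (\<lambda>\<omega>. (\<Sum>i\<in>{1..2::nat}. (X i \<omega>)\<^sup>2) / (\<Sum>i\<in>{1..2::nat}. X i \<omega>))"
    define L where "L = (\<lambda>\<omega>. (X 1 \<omega>) ^ (2 * p) / ((1 / real (2::nat)) * (\<Sum>i\<in>{1..2::nat}. X i \<omega>)) ^ p)"
    define G where "G = (\<lambda>\<omega>. (X 0 \<omega>) ^ p * indicator {\<omega>'. X 0 \<omega>' \<ge> real (2::nat)} \<omega>)"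
    have "ennreal ((1 / 2) ^ p * real (2::nat) ^ p) * (\<integral>\<^sup>+ \<omega>. ennreal (G \<omega>) \<partial>M) \<le> (\<integral>\<^sup>+ \<omega>. ennreal (L \<omega>) \<partial>M)"
      using P2[rule_format, of 2] unfolding G_def L_def by simp
    moreover have "(1 / 2) ^ p * real (2::nat) ^ p = (1::real)"
      by (simp add: power_one_over)
    ultimately have GL: "(\<integral>\<^sup>+ \<omega>. ennreal (G \<omega>) \<partial>M) \<le> (\<integral>\<^sup>+ \<omega>. ennreal (L \<omega>) \<partial>M)" by simp
    have LT: "L \<omega> \<le> 2 ^ p * T \<omega> ^ p" if "\<omega> \<in> space M" for \<omega>
    proof -
      define S where "S = (\<Sum>i\<in>{1..2::nat}. X i \<omega>)"
      define Q where "Q = (\<Sum>i\<in>{1..2::nat}. (X i \<omega>)\<^sup>2)"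
      have S0: "S > 0" unfolding S_def using pos[OF that] by (intro sum_pos) auto
      have Q1: "(X 1 \<omega>)\<^sup>2 \<le> Q" unfolding Q_def
        by (rule member_le_sum[where i=1 and f="\<lambda>i. (X i \<omega>)\<^sup>2"]) auto
      have "L \<omega> = 2 ^ p * ((X 1 \<omega>)\<^sup>2 / S) ^ p"
        unfolding L_def S_def[symmetric] using S0
        by (simp add: power_mult power_divide power_mult_distrib power_one_over)
      also have "\<dots> \<le> 2 ^ p * (Q / S) ^ p"
        using Q1 S0 by (intro mult_left_mono power_mono divide_right_mono) auto
      finally show ?thesis unfolding T_def Q_def[symmetric] S_def[symmetric] .
    qed
    have T0: "0 \<le> T \<omega>" if "\<omega> \<in> space M" for \<omega>
      unfolding T_def using pos[OF that] by (intro divide_nonneg_nonneg sum_nonneg) (auto intro: less_imp_le)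
    have "(\<integral>\<^sup>+ \<omega>. ennreal (L \<omega>) \<partial>M) \<le> (\<integral>\<^sup>+ \<omega>. ennreal (2 ^ p) * ennreal (T \<omega> ^ p) \<partial>M)"
    proof (intro nn_integral_mono)
      fix \<omega> assume w: "\<omega> \<in> space M"
      have "ennreal (L \<omega>) \<le> ennreal (2 ^ p * T \<omega> ^ p)" using LT[OF w] by (rule ennreal_leI)
      also have "\<dots> = ennreal (2 ^ p) * ennreal (T \<omega> ^ p)" using T0[OF w] by (simp add: ennreal_mult)
      finally show "ennreal (L \<omega>) \<le> ennreal (2 ^ p) * ennreal (T \<omega> ^ p)" .
    qed
    also have "\<dots> = ennreal (2 ^ p) * (\<integral>\<^sup>+ \<omega>. ennreal (T \<omega> ^ p) \<partial>M)"
      unfolding T_def by (rule nn_integral_cmult) measurable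
    also have "\<dots> \<le> ennreal (2 ^ p) * C"
      using C(2) unfolding T_def by (intro mult_left_mono) auto
    finally have LC: "(\<integral>\<^sup>+ \<omega>. ennreal (L \<omega>) \<partial>M) \<le> ennreal (2 ^ p) * C" .
    have "(\<integral>\<^sup>+ \<omega>. ennreal ((X 0 \<omega>) ^ p) \<partial>M) \<le> (\<integral>\<^sup>+ \<omega>. ennreal (G \<omega>) + ennreal (2 ^ p) \<partial>M)"
    proof (intro nn_integral_mono)
      fix \<omega> assume w: "\<omega> \<in> space M"
      have x0: "X 0 \<omega> > 0" using pos[OF w] .
      have "X 0 \<omega> ^ p \<le> G \<omega> + 2 ^ p"
      proof (cases "X 0 \<omega> \<ge> 2")
        case True then show ?thesis unfolding G_def by simp
      next
        case False
        then have "X 0 \<omega> ^ p \<le> 2 ^ p" using x0 by (intro power_mono) auto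
        then show ?thesis unfolding G_def using False by simp
      qed
      moreover have "G \<omega> \<ge> 0" unfolding G_def using x0 by (simp add: indicator_def)
      ultimately show "ennreal ((X 0 \<omega>) ^ p) \<le> ennreal (G \<omega>) + ennreal (2 ^ p)"
        by (simp add: ennreal_plus[symmetric] ennreal_leI del: ennreal_plus)
    qed
    also have "\<dots> = (\<integral>\<^sup>+ \<omega>. ennreal (G \<omega>) \<partial>M) + ennreal (2 ^ p)"
      unfolding G_def by (subst nn_integral_add) (auto simp: emeasure_space_1)
    also have "\<dots> < \<infinity>"
    proof -
      have "(\<integral>\<^sup>+ \<omega>. ennreal (G \<omega>) \<partial>M) \<le> ennreal (2 ^ p) * C" using GL LC by simp
      also have "\<dots> < \<infinity>" using C(1) by (simp add: ennreal_mult_less_top)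
      finally show ?thesis by simp
    qed
    finally show ?thesis .
  qed
  show ?thesis using P1 P2 by blast
qed

end
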